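(* If $k\geq 2$ is an integer such that $2k+1$ is prime, then $f(k)=\frac{k(k-2)}{3}$.
   Context: A $k$-colouring of the edges of the complete graph $K_n$ (colours from $[k]=\{1,\dots,k\}$) is called connected if for each colour $i\in[k]$ the edges of colour $i$ form a connected spanning subgraph of $K_n$. A triangle is multicoloured if its three edges have three distinct colours; its colour set is the set of these three colours. $f(k)$ denotes the minimum, over all $n$ and all connected $k$-colourings of $K_n$, of the number of distinct $3$-sets of colours that occur as colour sets of multicoloured triangles. *)

theory Defs
  imports Complex_Main "HOL-Computational_Algebra.Primes"
begin

definition edge_colouring :: "nat \<Rightarrow> nat \<Rightarrow> (nat set \<Rightarrow> nat) \<Rightarrow> bool" where
  "edge_colouring k n c \<longleftrightarrow>
     (\<forall>u v. u < n \<longrightarrow> v < n \<longrightarrow> u \<noteq> v \<longrightarrow> c {u, v} \<in> {1..k})"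

definition colour_graph :: "nat \<Rightarrow> (nat set \<Rightarrow> nat) \<Rightarrow> nat \<Rightarrow> nat \<Rightarrow> nat \<Rightarrow> bool" where
  "colour_graph n c i u v \<longleftrightarrow> u < n \<and> v < n \<and> u \<noteq> v \<and> c {u, v} = i"

definition connected_colouring :: "nat \<Rightarrow> nat \<Rightarrow> (nat set \<Rightarrow> nat) \<Rightarrow> bool" where
  "connected_colouring k n c \<longleftrightarrow> 2 \<le> n \<and> edge_colouring k n c \<and>
     (\<forall>i \<in> {1..k}. \<forall>u v. u < n \<longrightarrow> v < n \<longrightarrow> (colour_graph n c i)\<^sup>*\<^sup>* u v)"

definition multicoloured_triangle_sets :: "nat \<Rightarrow> (nat set \<Rightarrow> nat) \<Rightarrow> nat set set" where
  "multicoloured_triangle_sets n c =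
     {S. \<exists>u v w. u < n \<and> v < n \<and> w < n \<and> u \<noteq> v \<and> v \<noteq> w \<and> u \<noteq> w \<and>
          S = {c {u, v}, c {v, w}, c {u, w}} \<and> card S = 3}"

definition f :: "nat \<Rightarrow> nat" where
  "f k = (LEAST m. \<exists>n c. connected_colouring k n c \<and> m = card (multicoloured_triangle_sets n c))"

end

theory Submission imports Defs begin


definition G :: "nat set \<Rightarrow> (nat set \<Rightarrow> nat) \<Rightarrow> nat \<Rightarrow> nat \<Rightarrow> nat \<Rightarrow> bool" where
  "G V d i a b \<longleftrightarrow> a \<in> V \<and> b \<in> V \<and> a \<noteq> b \<and> d {a, b} = i"

definition conn :: "nat set \<Rightarrow> (nat set \<Rightarrow> nat) \<Rightarrow> nat \<Rightarrow> bool" where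
  "conn V d i \<longleftrightarrow> (\<forall>a\<in>V. \<forall>b\<in>V. (G V d i)\<^sup>*\<^sup>* a b)"

definition norb :: "nat set \<Rightarrow> (nat set \<Rightarrow> nat) \<Rightarrow> bool" where
  "norb V d \<longleftrightarrow> (\<forall>u\<in>V. \<forall>v\<in>V. \<forall>w\<in>V. u \<noteq> v \<longrightarrow> v \<noteq> w \<longrightarrow> u \<noteq> w \<longrightarrow>
      \<not> (d {u, v} \<noteq> d {v, w} \<and> d {v, w} \<noteq> d {u, w} \<and> d {u, v} \<noteq> d {u, w}))"

lemma norbE: "norb V d \<Longrightarrow> u \<in> V \<Longrightarrow> v \<in> V \<Longrightarrow> w \<in> V \<Longrightarrow> u \<noteq> v \<Longrightarrow> v \<noteq> w \<Longrightarrow> u \<noteq> w \<Longrightarrow>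
   d {u, v} = d {v, w} \<or> d {v, w} = d {u, w} \<or> d {u, v} = d {u, w}"
  unfolding norb_def by blast

lemma G_sym: "G V d i a b \<Longrightarrow> G V d i b a"
  by (auto simp: G_def insert_commute)

lemma rt_sym: "(G V d i)\<^sup>*\<^sup>* a b \<Longrightarrow> (G V d i)\<^sup>*\<^sup>* b a"
proof (induction rule: rtranclp_induct)
  case base then show ?case by simp
next
  case (step y z)
  then show ?case using G_sym by (metis converse_rtranclp_into_rtranclp)
qed

lemma first_step: "(G V d x)\<^sup>*\<^sup>* a b \<Longrightarrow> a \<noteq> b \<Longrightarrow> \<exists>y. G V d x a y"
  by (metis converse_rtranclpE)

lemma firsthit:
  assumes "(G V d i)\<^sup>*\<^sup>* a b" "a \<in> V - {v}"
  shows "((G (V - {v}) d i)\<^sup>*\<^sup>* a b \<and> b \<in> V - {v}) \<or>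
         (\<exists>y. (G (V - {v}) d i)\<^sup>*\<^sup>* a y \<and> y \<in> V - {v} \<and> d {y, v} = i)"
  using assms
proof (induction rule: rtranclp_induct)
  case base then show ?case by simp
next
  case (step x b')
  from step.IH[OF step.prems] show ?case
  proof
    assume h: "(G (V - {v}) d i)\<^sup>*\<^sup>* a x \<and> x \<in> V - {v}"
    show ?case
    proof (cases "b' = v")
      case True
      have "d {x, v} = i" "x \<in> V - {v}" using h step.hyps(2) True by (auto simp: G_def insert_commute)
      then show ?thesis using h by blast
    next
      case False
      then have "G (V - {v}) d i x b'" using h step.hyps(2) by (auto simp: G_def)
      then have "(G (V - {v}) d i)\<^sup>*\<^sup>* a b'" using h by (meson rtranclp.rtrancl_into_rtrancl)
      moreover have "b' \<in> V - {v}" using False step.hyps(2) by (auto simp: G_def)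
      ultimately show ?thesis by blast
    qed
  next
    assume "\<exists>y. (G (V - {v}) d i)\<^sup>*\<^sup>* a y \<and> y \<in> V - {v} \<and> d {y, v} = i"
    then show ?case by blast
  qed
qed

lemma constancy:
  assumes "(G D d i)\<^sup>*\<^sup>* a a'" "x \<in> D" "\<not> (G D d i)\<^sup>*\<^sup>* a x" "a \<in> D" "norb D d"
  shows "d {a, x} = d {a', x}"
  using assms(1)
proof (induction rule: rtranclp_induct)
  case base then show ?case by simp
next
  case (step b b')
  have bD: "b \<in> D" "b' \<in> D" "b \<noteq> b'" "d {b, b'} = i" using step.hyps(2) by (auto simp: G_def)
  have "b \<noteq> x" using step.hyps(1) assms(3) by auto
  have "b' \<noteq> x" using step.hyps assms(3) by (auto intro: rtranclp.rtrancl_into_rtrancl)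
  have "d {b, x} \<noteq> i"
  proof
    assume "d {b, x} = i"
    then have "G D d i b x" using bD `b \<noteq> x` assms(2) by (auto simp: G_def)
    then show False using step.hyps(1) assms(3) by (auto intro: rtranclp.rtrancl_into_rtrancl)
  qed
  have "d {b', x} \<noteq> i"
  proof
    assume "d {b', x} = i"
    then have "G D d i b' x" using bD `b' \<noteq> x` assms(2) by (auto simp: G_def)
    then show False using step.hyps assms(3) by (meson rtranclp.rtrancl_into_rtrancl)
  qed
  have "d {b', x} = d {b, x}"
  proof -
    have "\<not> (d {b, b'} \<noteq> d {b', x} \<and> d {b', x} \<noteq> d {b, x} \<and> d {b, b'} \<noteq> d {b, x})"
      using assms(5) bD `b \<noteq> x` `b' \<noteq> x` assms(2) unfolding norb_def by blast
    then show ?thesis using bD(4) `d {b, x} \<noteq> i` `d {b', x} \<noteq> i` by auto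
  qed
  then show ?case using step.IH by simp
qed

lemma rt_trans_sym:
  "(G D d i)\<^sup>*\<^sup>* z a \<Longrightarrow> (G D d i)\<^sup>*\<^sup>* z b \<Longrightarrow> (G D d i)\<^sup>*\<^sup>* a b"
  by (meson rt_sym rtranclp_trans)

lemma norb_sub: "norb V d \<Longrightarrow> D \<subseteq> V \<Longrightarrow> norb D d"
  unfolding norb_def by blast

lemma core:
  assumes fin: "v \<in> V" and nb: "norb V d"
    and ij: "i \<noteq> j" and jj: "j \<noteq> j'" and ij': "i \<noteq> j'"
    and nc: "\<not> conn (V - {v}) d i" and ci: "conn V d i" and cj': "conn V d j'"
    and z: "z \<in> V - {v}" "d {v, z} = j"
  shows False
proof -
  define D where "D = V - {v}"
  define R where "R = (G D d i)\<^sup>*\<^sup>*"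
  have nbD: "norb D d" using nb norb_sub D_def by blast
  have zD: "z \<in> D" using z D_def by simp
  have hit: "\<exists>y. R a y \<and> y \<in> D \<and> d {y, v} = i" if "a \<in> D" for a
  proof -
    have "(G V d i)\<^sup>*\<^sup>* a v" using ci that fin D_def by (auto simp: conn_def)
    from firsthit[OF this, of v] that show ?thesis unfolding R_def D_def by auto
  qed
  have c1: "d {y, z} = j" if yD: "y \<in> D" and nzy: "\<not> R z y" for y
  proof -
    obtain y' where y': "R y y'" "y' \<in> D" "d {y', v} = i" using hit[OF yD] by blast
    have nyz: "\<not> R y z" using nzy rt_sym unfolding R_def by blast
    have e1: "d {y, z} = d {y', z}" using constancy[OF y'(1)[unfolded R_def] zD nyz[unfolded R_def] yD nbD] .
    have "y' \<noteq> z" using y'(1) nyz by auto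
    have "d {y', z} \<noteq> i"
    proof
      assume "d {y', z} = i"
      then have "G D d i y' z" using `y' \<noteq> z` y'(2) zD by (auto simp: G_def)
      then show False using y'(1) nyz unfolding R_def by (meson rtranclp.rtrancl_into_rtrancl)
    qed
    have "y' \<in> V" "z \<in> V" "v \<noteq> y'" "v \<noteq> z" using y'(2) zD D_def by auto
    have "d {v, y'} = d {y', z} \<or> d {y', z} = d {v, z} \<or> d {v, y'} = d {v, z}"
      using norbE[OF nb fin `y' \<in> V` `z \<in> V` `v \<noteq> y'` `y' \<noteq> z` `v \<noteq> z`] .
    then have "d {y', z} = j" using y'(3) z(2) ij `d {y', z} \<noteq> i` by (auto simp: insert_commute)
    then show ?thesis using e1 by simp
  qed
  have c2: "d {y, w} = j" if "y \<in> D" "w \<in> D" "\<not> R z y" "R z w" for y w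
  proof -
    have "d {z, y} = d {w, y}" using constancy[OF that(4)[unfolded R_def] that(1) that(3)[unfolded R_def] zD nbD] .
    then show ?thesis using c1[OF that(1) that(3)] by (simp add: insert_commute)
  qed
  obtain y0 where y0: "y0 \<in> D" "\<not> R z y0"
  proof -
    obtain a b where ab: "a \<in> D" "b \<in> D" "\<not> R a b" using nc unfolding conn_def R_def D_def by blast
    then show ?thesis using that rt_trans_sym unfolding R_def by blast
  qed
  obtain y1 where y1: "y1 \<in> D" "\<not> R z y1" "d {y1, v} = i"
  proof -
    obtain y where y: "R y0 y" "y \<in> D" "d {y, v} = i" using hit[OF y0(1)] by blast
    have "\<not> R z y" using y(1) y0(2) unfolding R_def by (meson rt_sym rtranclp_trans)
    then show ?thesis using that y by blast
  qed
  have c3: "d {v, w} \<noteq> j'" if "w \<in> D" "R z w" for w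
  proof
    assume h: "d {v, w} = j'"
    have "d {y1, w} = j" using c2[OF y1(1) that(1) y1(2) that(2)] .
    have "y1 \<noteq> w" using y1(2) that(2) by auto
    have "y1 \<in> V" "w \<in> V" "v \<noteq> y1" "v \<noteq> w" using y1(1) that(1) D_def by auto
    have "d {v, y1} = d {y1, w} \<or> d {y1, w} = d {v, w} \<or> d {v, y1} = d {v, w}"
      using norbE[OF nb fin `y1 \<in> V` `w \<in> V` `v \<noteq> y1` `y1 \<noteq> w` `v \<noteq> w`] .
    then show False using h `d {y1, w} = j` y1(3) ij jj ij' by (auto simp: insert_commute)
  qed
  have c4: "b \<in> D \<and> R z b" if "(G V d j')\<^sup>*\<^sup>* z b" for b
    using that
  proof (induction rule: rtranclp_induct)
    case base then show ?case using zD unfolding R_def by simp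
  next
    case (step a b)
    have ab: "b \<in> V" "a \<noteq> b" "d {a, b} = j'" using step.hyps(2) by (auto simp: G_def)
    have "b \<noteq> v" using c3 step.IH ab(3) by (auto simp: insert_commute)
    then have bD: "b \<in> D" using ab D_def by simp
    have "R z b"
    proof (rule ccontr)
      assume "\<not> R z b"
      then have "d {b, a} = j" using c2[OF bD] step.IH by blast
      then show False using ab(3) jj by (simp add: insert_commute)
    qed
    then show ?case using bD by simp
  qed
  have "(G V d j')\<^sup>*\<^sup>* z v" using cj' z fin by (auto simp: conn_def)
  then show False using c4 D_def by blast
qed

lemma conn_first:
  assumes "conn V d x" "v \<in> V" "w \<in> V" "w \<noteq> v"
  shows "\<exists>z. z \<in> V - {v} \<and> d {v, z} = x"
proof -
  have "(G V d x)\<^sup>*\<^sup>* v w" using assms by (auto simp: conn_def)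
  from first_step[OF this assms(4)[symmetric]] obtain y where "G V d x v y" by blast
  then show ?thesis by (auto simp: G_def)
qed

lemma gallai_step:
  assumes "v \<in> V" "norb V d" "i \<noteq> j" "j \<noteq> j'" "i \<noteq> j'"
    "\<not> conn (V - {v}) d i" "conn V d i" "conn V d j" "conn V d j'" "w \<in> V" "w \<noteq> v"
  shows False
proof -
  obtain z where "z \<in> V - {v}" "d {v, z} = j" using conn_first[OF assms(8,1,10,11)] by blast
  then show False using core[OF assms(1-7,9)] by blast
qed

lemma gallai_aux:
  assumes pq: "p \<noteq> q" "q \<noteq> r" "p \<noteq> r"
  shows "\<forall>V. card V = n \<longrightarrow> finite V \<longrightarrow> 2 \<le> n \<longrightarrow> norb V d \<longrightarrow> conn V d p \<longrightarrow> conn V d q \<longrightarrow> conn V d r \<longrightarrow> False"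
proof (induction n)
  case 0 then show ?case by simp
next
  case (Suc m)
  show ?case
  proof (intro allI impI)
    fix V :: "nat set"
    assume V: "card V = Suc m" "finite V" "2 \<le> Suc m" "norb V d" "conn V d p" "conn V d q" "conn V d r"
    have "V \<noteq> {}" using V(1) by auto
    then obtain v where v: "v \<in> V" by blast
    have cD: "card (V - {v}) = m" using V(1,2) v by simp
    have "V - {v} \<noteq> {}"
    proof
      assume "V - {v} = {}"
      then have "card (V - {v}) = 0" by (simp only: card.empty)
      then show False using cD V(3) by simp
    qed
    then obtain w where w: "w \<in> V" "w \<noteq> v" by blast
    show False
    proof (cases "m = 1")
      case True
      have "card (V - {v}) = 1" using cD True by simp
      then obtain x where x: "V - {v} = {x}" by (rule card_1_singletonE)
      have "w \<in> V - {v}" using w by simp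
      then have "x = w" using x by simp
      have "V = insert v (V - {v})" using v by (simp add: insert_absorb)
      then have "V = {v, w}" using x `x = w` by simp
      obtain z1 where z1: "z1 \<in> V - {v}" "d {v, z1} = p" using conn_first[OF V(5) v w] by blast
      obtain z2 where z2: "z2 \<in> V - {v}" "d {v, z2} = q" using conn_first[OF V(6) v w] by blast
      have "z1 = w" "z2 = w" using z1(1) z2(1) x `x = w` by simp_all
      then show False using z1 z2 pq by simp
    next
      case False
      then have m2: "2 \<le> m" using V(3) cD by linarith
      have nD: "norb (V - {v}) d" using V(4) norb_sub by blast
      have "\<not> (conn (V - {v}) d p \<and> conn (V - {v}) d q \<and> conn (V - {v}) d r)"
        using Suc.IH cD V(2) m2 nD by blast
      then consider "\<not> conn (V - {v}) d p" | "\<not> conn (V - {v}) d q" | "\<not> conn (V - {v}) d r" by blast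
      then show False
      proof cases
        case 1 show False using gallai_step[OF v V(4) pq(1) pq(2) pq(3) 1 V(5) V(6) V(7) w] .
      next
        case 2 show False using gallai_step[OF v V(4) pq(1)[symmetric] pq(3) pq(2) 2 V(6) V(5) V(7) w] .
      next
        case 3 show False using gallai_step[OF v V(4) pq(3)[symmetric] pq(1) pq(2)[symmetric] 3 V(7) V(5) V(6) w] .
      qed
    qed
  qed
qed



abbreviation "TT n c \<equiv> multicoloured_triangle_sets n c"

lemma T_sub:
  assumes "edge_colouring k n c" "t \<in> TT n c"
  shows "t \<subseteq> {1..k}" "card t = 3"
  using assms unfolding multicoloured_triangle_sets_def edge_colouring_def by auto

lemma T_fin: assumes "edge_colouring k n c" shows "finite (TT n c)"
proof -
  have "TT n c \<subseteq> Pow {1..k}" using T_sub[OF assms] by blast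
  then show ?thesis by (rule finite_subset) simp
qed

lemma card_filter_sum: "finite T \<Longrightarrow> card {t\<in>T. P t} = (\<Sum>t\<in>T. if P t then 1 else 0)"
  by (simp add: sum.If_cases Int_def)

lemma double_count:
  assumes "finite T" "\<And>t. t \<in> T \<Longrightarrow> t \<subseteq> K \<and> card t = 3" "finite K"
  shows "(\<Sum>a\<in>K. card {t\<in>T. a \<in> t}) = 3 * card T"
proof -
  have "(\<Sum>a\<in>K. card {t\<in>T. a \<in> t}) = (\<Sum>a\<in>K. \<Sum>t\<in>T. if a \<in> t then 1 else 0)"
    using assms(1) by (simp add: card_filter_sum)
  also have "\<dots> = (\<Sum>t\<in>T. \<Sum>a\<in>K. if a \<in> t then 1 else 0)" by (rule sum.swap)
  also have "\<dots> = (\<Sum>t\<in>T. card {a\<in>K. a \<in> t})" using assms(3) by (simp add: card_filter_sum)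
  also have "\<dots> = (\<Sum>t\<in>T. 3)"
  proof (rule sum.cong)
    fix t assume "t \<in> T"
    then have "{a\<in>K. a \<in> t} = t" using assms(2) by blast
    then show "card {a\<in>K. a \<in> t} = 3" using assms(2) `t \<in> T` by simp
  qed simp
  finally show ?thesis by simp
qed

lemma rainbow:
  assumes cc: "connected_colouring k n c" and a: "a \<in> {1..k}"
    and S: "S \<subseteq> {1..k} - {a}" "S \<noteq> {}" "({1..k} - {a}) - S \<noteq> {}"
  shows "\<exists>t\<in>TT n c. \<exists>y. a \<in> t \<and> y \<in> ({1..k} - {a}) - S \<and> t \<subseteq> insert a (insert y S) \<and> y \<in> t"
proof -
  define g where "g x = (if x = a then 1 else if x \<in> S then 2 else (3::nat))" for x
  define dd where "dd e = g (c e)" for e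
  define V where "V = {0..<n}"
  have ec: "edge_colouring k n c" and n2: "2 \<le> n"
    and cg: "\<And>i u v. i \<in> {1..k} \<Longrightarrow> u < n \<Longrightarrow> v < n \<Longrightarrow> (colour_graph n c i)\<^sup>*\<^sup>* u v"
    using cc unfolding connected_colouring_def by auto
  have lift: "conn V dd x" if "i \<in> {1..k}" "dd' = dd" "\<And>e. c e = i \<Longrightarrow> dd e = x" for i x dd'
    unfolding conn_def
  proof (intro ballI)
    fix u v assume "u \<in> V" "v \<in> V"
    then have "(colour_graph n c i)\<^sup>*\<^sup>* u v" using cg that(1) V_def by auto
    then show "(G V dd x)\<^sup>*\<^sup>* u v"
      by (rule mono_rtranclp[rule_format, rotated]) (auto simp: colour_graph_def G_def V_def that(3))
  qed
  have c1: "conn V dd 1" using lift[OF a refl] by (simp add: dd_def g_def)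
  obtain s where s: "s \<in> S" using S(2) by blast
  have c2: "conn V dd 2"
  proof (rule lift[OF _ refl])
    show "s \<in> {1..k}" using s S(1) by auto
  next
    fix e assume "c e = s" then show "dd e = 2" using s S(1) by (auto simp: dd_def g_def)
  qed
  obtain r where r: "r \<in> ({1..k} - {a}) - S" using S(3) by blast
  have c3: "conn V dd 3"
  proof (rule lift[OF _ refl])
    show "r \<in> {1..k}" using r by auto
  next
    fix e assume "c e = r" then show "dd e = 3" using r by (auto simp: dd_def g_def)
  qed
  have "\<not> norb V dd"
    using gallai_aux[of 1 2 3 "card V" dd] c1 c2 c3 n2 V_def by auto
  then obtain u v w where uvw: "u \<in> V" "v \<in> V" "w \<in> V" "u \<noteq> v" "v \<noteq> w" "u \<noteq> w"
    "dd {u, v} \<noteq> dd {v, w}" "dd {v, w} \<noteq> dd {u, w}" "dd {u, v} \<noteq> dd {u, w}"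
    unfolding norb_def by blast
  define t where "t = {c {u, v}, c {v, w}, c {u, w}}"
  have cin: "c {u, v} \<in> {1..k}" "c {v, w} \<in> {1..k}" "c {u, w} \<in> {1..k}"
    using ec uvw V_def unfolding edge_colouring_def by auto
  have gd: "g (c {u, v}) \<noteq> g (c {v, w})" "g (c {v, w}) \<noteq> g (c {u, w})" "g (c {u, v}) \<noteq> g (c {u, w})"
    using uvw(7-9) unfolding dd_def by auto
  have cne: "c {u, v} \<noteq> c {v, w}" "c {v, w} \<noteq> c {u, w}" "c {u, v} \<noteq> c {u, w}"
    using gd by metis+
  have grange: "g x \<in> {1, 2, 3}" for x by (simp add: g_def)
  have "card t = 3" using cne unfolding t_def by simp
  have lt: "u < n" "v < n" "w < n" using uvw V_def by auto
  have tT: "t \<in> TT n c"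
    unfolding multicoloured_triangle_sets_def mem_Collect_eq
    apply (rule exI[of _ u], rule exI[of _ v], rule exI[of _ w])
    using lt uvw(4-6) `card t = 3` t_def by simp
  have ex: "\<exists>x\<in>t. g x = m" if "m \<in> {1,2,3}" for m
  proof -
    have "g (c {u, v}) \<in> {1, 2, 3}" "g (c {v, w}) \<in> {1, 2, 3}" "g (c {u, w}) \<in> {1, 2, 3}"
      using grange by auto
    then have "m \<in> {g (c {u, v}), g (c {v, w}), g (c {u, w})}" using gd that by auto
    then show ?thesis unfolding t_def by auto
  qed
  have ginj: "x = y" if "x \<in> t" "y \<in> t" "g x = g y" for x y
    using that gd unfolding t_def by auto
  obtain e3 where e3: "e3 \<in> t" "g e3 = 3" using ex[of 3] by auto
  obtain e1 where e1: "e1 \<in> t" "g e1 = 1" using ex[of 1] by auto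
  have tk: "t \<subseteq> {1..k}" using cin unfolding t_def by auto
  show ?thesis
  proof (intro bexI exI conjI)
    show "t \<in> TT n c" by (rule tT)
    have "e1 = a" using e1(2) by (auto simp: g_def split: if_splits)
    then show "a \<in> t" using e1 by simp
    show "e3 \<in> ({1..k} - {a}) - S" using e3 tk by (auto simp: g_def split: if_splits)
    show "t \<subseteq> insert a (insert e3 S)"
    proof
      fix x assume x: "x \<in> t"
      show "x \<in> insert a (insert e3 S)"
      proof (cases "g x = 3")
        case True then show ?thesis using ginj[OF x e3(1)] e3(2) by simp
      next
        case False then show ?thesis by (auto simp: g_def split: if_splits)
      qed
    qed
    show "e3 \<in> t" using e3 by simp
  qed
qed

lemma greedy:
  assumes cc: "connected_colouring k n c" and a: "a \<in> {1..k}"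
  shows "m + 1 \<le> card ({1..k} - {a}) \<Longrightarrow>
    \<exists>S \<subseteq> {1..k} - {a}. card S = m + 1 \<and> m \<le> card {t \<in> TT n c. a \<in> t \<and> t \<subseteq> insert a S}"
proof (induction m)
  case 0
  have "{1..k} - {a} \<noteq> {}"
  proof
    assume "{1..k} - {a} = {}"
    then show False using 0 by (simp only: card.empty)
  qed
  then obtain x where "x \<in> {1..k} - {a}" by blast
  then show ?case by (intro exI[of _ "{x}"]) auto
next
  case (Suc m)
  have ec: "edge_colouring k n c" using cc unfolding connected_colouring_def by auto
  have fT: "finite (TT n c)" using T_fin[OF ec] .
  obtain S where S: "S \<subseteq> {1..k} - {a}" "card S = m + 1" "m \<le> card {t \<in> TT n c. a \<in> t \<and> t \<subseteq> insert a S}"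
    using Suc.IH Suc.prems by auto
  have "S \<noteq> {}" using S(2) by auto
  moreover have "({1..k} - {a}) - S \<noteq> {}"
  proof
    assume "({1..k} - {a}) - S = {}"
    then have "{1..k} - {a} \<subseteq> S" by blast
    then have "card ({1..k} - {a}) \<le> card S" using S(1) by (intro card_mono) (auto intro: finite_subset)
    then show False using S(2) Suc.prems by simp
  qed
  ultimately obtain t y where ty: "t \<in> TT n c" "a \<in> t" "y \<in> ({1..k} - {a}) - S" "t \<subseteq> insert a (insert y S)" "y \<in> t"
    using rainbow[OF cc a S(1)] by blast
  define S' where "S' = insert y S"
  have fS: "finite S" using S(1) by (auto intro: finite_subset)
  have "S' \<subseteq> {1..k} - {a}" using S(1) ty(3) S'_def by auto
  moreover have "card S' = Suc m + 1" using S(2) ty(3) fS S'_def by simp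
  moreover have "Suc m \<le> card {t \<in> TT n c. a \<in> t \<and> t \<subseteq> insert a S'}"
  proof -
    have sub: "insert t {t \<in> TT n c. a \<in> t \<and> t \<subseteq> insert a S} \<subseteq> {t \<in> TT n c. a \<in> t \<and> t \<subseteq> insert a S'}"
      using ty S'_def by auto
    have nin: "t \<notin> {t \<in> TT n c. a \<in> t \<and> t \<subseteq> insert a S}" using ty(3,5) by auto
    have "card (insert t {t \<in> TT n c. a \<in> t \<and> t \<subseteq> insert a S}) = Suc (card {t \<in> TT n c. a \<in> t \<and> t \<subseteq> insert a S})"
      using nin fT by simp
    moreover have "card (insert t {t \<in> TT n c. a \<in> t \<and> t \<subseteq> insert a S}) \<le> card {t \<in> TT n c. a \<in> t \<and> t \<subseteq> insert a S'}"
      using sub fT by (intro card_mono) auto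
    ultimately show ?thesis using S(3) by simp
  qed
  ultimately show ?case by blast
qed

lemma deg_lower:
  assumes cc: "connected_colouring k n c" and a: "a \<in> {1..k}" and k: "2 \<le> k"
  shows "k - 2 \<le> card {t \<in> TT n c. a \<in> t}"
proof -
  have ec: "edge_colouring k n c" using cc unfolding connected_colouring_def by auto
  have fT: "finite (TT n c)" using T_fin[OF ec] .
  have cO: "card ({1..k} - {a}) = k - 1" using a by simp
  obtain S where S: "S \<subseteq> {1..k} - {a}" "card S = k - 2 + 1" "k - 2 \<le> card {t \<in> TT n c. a \<in> t \<and> t \<subseteq> insert a S}"
  proof -
    have "k - 2 + 1 \<le> card ({1..k} - {a})" using cO k by simp
    from greedy[OF cc a this] show ?thesis using that by blast
  qed
  have "card {t \<in> TT n c. a \<in> t \<and> t \<subseteq> insert a S} \<le> card {t \<in> TT n c. a \<in> t}"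
    using fT by (intro card_mono) auto
  then show ?thesis using S(3) by simp
qed

lemma lower_bound:
  assumes cc: "connected_colouring k n c" and k: "2 \<le> k"
  shows "k * (k - 2) \<le> 3 * card (TT n c)"
proof -
  have ec: "edge_colouring k n c" using cc unfolding connected_colouring_def by auto
  have fT: "finite (TT n c)" using T_fin[OF ec] .
  have "k * (k - 2) = (\<Sum>a\<in>{1..k}. k - 2)" by simp
  also have "\<dots> \<le> (\<Sum>a\<in>{1..k}. card {t \<in> TT n c. a \<in> t})"
    using deg_lower[OF cc _ k] by (intro sum_mono) auto
  also have "\<dots> = 3 * card (TT n c)"
    using double_count[OF fT _ finite_atLeastAtMost] T_sub[OF ec] by blast
  finally show ?thesis .
qed



definition cls :: "int \<Rightarrow> int \<Rightarrow> int" where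
  "cls P x = min (x mod P) ((- x) mod P)"

definition ncls :: "int \<Rightarrow> int \<Rightarrow> nat" where
  "ncls P x = nat (cls P x)"

lemma cls_neg: "cls P (- x) = cls P x"
  by (simp add: cls_def min.commute)

lemma cls_mod: "x mod P = y mod P \<Longrightarrow> cls P x = cls P y"
  unfolding cls_def by (metis mod_minus_eq)

lemma cls_shift: "x = y + P * z \<Longrightarrow> cls P x = cls P y"
  by (rule cls_mod) simp

lemma cls_shift_neg: "x = - y + P * z \<Longrightarrow> cls P x = cls P y"
  using cls_shift[of x "- y" P z] cls_neg by simp

lemma cls_nonneg: "P > 0 \<Longrightarrow> cls P x \<ge> 0"
  by (simp add: cls_def)

lemma ncls_eq_iff: "P > 0 \<Longrightarrow> ncls P x = ncls P y \<longleftrightarrow> cls P x = cls P y"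
  using cls_nonneg[of P x] cls_nonneg[of P y] by (simp add: ncls_def eq_nat_nat_iff)

lemma cls_small:
  assumes "P = 2 * int k + 1" "1 \<le> i" "i \<le> int k"
  shows "cls P i = i"
proof -
  have "i mod P = i" using assms by simp
  moreover have "(- i) mod P = P - i" using assms by (simp add: zmod_zminus1_eq_if)
  ultimately show ?thesis using assms by (simp add: cls_def)
qed

lemma cls_range:
  assumes "P = 2 * int k + 1" "x mod P \<noteq> 0"
  shows "1 \<le> cls P x" "cls P x \<le> int k"
proof -
  have P0: "P > 0" using assms by simp
  have r: "0 \<le> x mod P" "x mod P < P" using pos_mod_sign[OF P0] pos_mod_bound[OF P0] by auto
  have "(- x) mod P = P - x mod P" using assms by (simp add: zmod_zminus1_eq_if)
  then have c: "cls P x = min (x mod P) (P - x mod P)" by (simp add: cls_def)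
  show "1 \<le> cls P x" using c r assms(2) by linarith
  show "cls P x \<le> int k" using c r assms(1) by linarith
qed

lemma exists_mult:
  assumes pr: "prime (2 * k + 1)" and a: "1 \<le> a" "a \<le> k"
  shows "\<exists>m. 0 \<le> m \<and> m < 2 * int k + 1 \<and> (m * int a) mod (2 * int k + 1) = e mod (2 * int k + 1)"
proof -
  define P where "P = 2 * int k + 1"
  have "P = int (2 * k + 1)" unfolding P_def by simp
  then have prP: "prime P" using pr by (simp only: prime_nat_int_transfer)
  have "\<not> P dvd int a"
  proof
    assume "P dvd int a"
    then have "P \<le> int a" using a by (intro zdvd_imp_le) auto
    then show False using a P_def by simp
  qed
  then have "coprime P (int a)" using prP by (simp add: prime_imp_coprime)
  then have "gcd (int a) P = 1" by (simp add: coprime_iff_gcd_eq_1 gcd.commute)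
  then obtain s t where st: "s * int a + t * P = 1" using bezout_int[of "int a" P] by auto
  define m where "m = (e * s) mod P"
  have P0: "P > 0" using P_def by simp
  have "(m * int a) mod P = (e * s * int a) mod P" unfolding m_def by (simp add: mod_mult_left_eq)
  also have "e * s * int a = e + P * (- e * t)"
  proof -
    have "s * int a = 1 - t * P" using st by linarith
    then have "e * s * int a = e * (1 - t * P)" by (simp add: mult.assoc)
    then show ?thesis by (simp add: algebra_simps)
  qed
  also have "(e + P * (- e * t)) mod P = e mod P" by (simp only: mod_mult_self2)
  finally have "(m * int a) mod P = e mod P" .
  moreover have "0 \<le> m" "m < P" unfolding m_def using pos_mod_sign[OF P0] pos_mod_bound[OF P0] by auto
  ultimately show ?thesis unfolding P_def by blast
qed

lemma triple_core:
  assumes P: "P = 2 * int k + 1" and pr: "prime (2 * k + 1)" and k: "2 \<le> k"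
    and e1: "e1 mod P = int a" and a: "1 \<le> a" "a \<le> k"
    and sum: "e1 + e2 + e3 = 0" and nz: "e2 mod P \<noteq> 0"
    and d: "cls P e1 \<noteq> cls P e2" "cls P e2 \<noteq> cls P e3" "cls P e1 \<noteq> cls P e3"
  shows "\<exists>j\<in>{2..k-1}. {ncls P e1, ncls P e2, ncls P e3} = {a, ncls P (int j * int a), ncls P (int (j+1) * int a)}"
proof -
  define A where "A = int a"
  obtain m where m: "0 \<le> m" "m < P" "(m * A) mod P = e2 mod P"
    using exists_mult[OF pr a, of e2] P A_def by blast
  have cA: "cls P A = A" using cls_small[OF P, of A] a A_def by simp
  have AmodP: "A mod P = A" using a A_def P by simp
  have c1: "cls P e1 = A" using cls_mod[of e1 P A] e1 AmodP cA A_def by simp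
  have c2: "cls P e2 = cls P (m * A)" using cls_mod[of e2 P "m * A"] m(3) by simp
  have c3: "cls P e3 = cls P ((m + 1) * A)"
  proof -
    have "e3 = - (e1 + e2)" using sum by simp
    then have h1: "cls P e3 = cls P (e1 + e2)" using cls_neg[of P "e1 + e2"] by simp
    have h2: "(e1 + e2) mod P = (A + m * A) mod P"
    proof -
      have "(e1 + e2) mod P = (e1 mod P + e2 mod P) mod P" by (simp only: mod_add_eq)
      also have "\<dots> = (A mod P + (m * A) mod P) mod P" using e1 m(3) AmodP A_def by simp
      also have "\<dots> = (A + m * A) mod P" by (simp only: mod_add_eq)
      finally show ?thesis .
    qed
    have h3: "(m + 1) * A = A + m * A" by (simp add: algebra_simps)
    show ?thesis using h1 h2 h3 cls_mod[of "e1 + e2" P "(m + 1) * A"] by simp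
  qed
  have "m \<noteq> 0"
  proof
    assume "m = 0" then show False using m(3) nz by simp
  qed
  moreover have "m \<noteq> 1"
  proof
    assume "m = 1" then show False using c1 c2 cA d(1) by simp
  qed
  moreover have "m \<noteq> int k"
  proof
    assume mk: "m = int k"
    have "cls P ((m + 1) * A) = cls P (m * A)" by (rule cls_shift_neg[where z = A]) (simp add: mk P algebra_simps)
    then show False using c2 c3 d(2) by simp
  qed
  moreover have "m \<noteq> 2 * int k - 1"
  proof
    assume mk: "m = 2 * int k - 1"
    have "cls P ((m + 1) * A) = cls P A" by (rule cls_shift_neg[where z = A]) (simp add: mk P algebra_simps)
    then show False using c1 c3 cA d(3) by simp
  qed
  moreover have "m \<noteq> 2 * int k"
  proof
    assume mk: "m = 2 * int k"
    have "cls P (m * A) = cls P A" by (rule cls_shift_neg[where z = A]) (simp add: mk P algebra_simps)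
    then show False using c1 c2 cA d(1) by simp
  qed
  ultimately have mr: "(2 \<le> m \<and> m \<le> int k - 1) \<or> (int k + 1 \<le> m \<and> m \<le> 2 * int k - 2)"
    using m(1,2) P by linarith
  have base: "{ncls P e1, ncls P e2, ncls P e3} = {a, ncls P (m * A), ncls P ((m + 1) * A)}"
    unfolding ncls_def using c1 c2 c3 A_def by simp
  show ?thesis
  proof (cases "2 \<le> m \<and> m \<le> int k - 1")
    case True
    define j where "j = nat m"
    have "int j = m" using True j_def by simp
    then have "j \<in> {2..k-1}" using True by auto
    moreover have "{ncls P e1, ncls P e2, ncls P e3} = {a, ncls P (int j * int a), ncls P (int (j+1) * int a)}"
      using base `int j = m` A_def by (simp add: add.commute)
    ultimately show ?thesis by blast
  next
    case False
    then have mr2: "int k + 1 \<le> m" "m \<le> 2 * int k - 2" using mr by auto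
    define j where "j = nat (2 * int k - m)"
    have ij: "int j = 2 * int k - m" using mr2 j_def by simp
    then have "j \<in> {2..k-1}" using mr2 by auto
    moreover have "cls P (int j * A) = cls P ((m + 1) * A)"
      by (rule cls_shift_neg[where z = A]) (simp add: ij P algebra_simps)
    moreover have "cls P (int (j + 1) * A) = cls P (m * A)"
      by (rule cls_shift_neg[where z = A]) (simp add: ij P algebra_simps)
    ultimately show ?thesis using base A_def unfolding ncls_def
      by (intro bexI[of _ j]) (auto simp: insert_commute)
  qed
qed

definition ccol :: "nat \<Rightarrow> nat set \<Rightarrow> nat" where
  "ccol k S = ncls (2 * int k + 1) (int (Max S) - int (Min S))"

lemma ccol_pair: "u \<noteq> v \<Longrightarrow> ccol k {u, v} = ncls (2 * int k + 1) (int v - int u)"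
proof (cases "u < v")
  case True
  then show ?thesis by (simp add: ccol_def max_def min_def)
next
  case False
  assume "u \<noteq> v"
  then have "v < u" using False by simp
  then have "ccol k {u, v} = ncls (2 * int k + 1) (- (int v - int u))" by (simp add: ccol_def max_def min_def)
  then show ?thesis unfolding ncls_def using cls_neg by metis
qed

lemma diff_mod_ne0:
  assumes "u < 2 * k + 1" "v < 2 * k + 1" "u \<noteq> v"
  shows "(int v - int u) mod (2 * int k + 1) \<noteq> 0"
proof
  assume "(int v - int u) mod (2 * int k + 1) = 0"
  then have "(2 * int k + 1) dvd (int v - int u)" by (simp add: mod_eq_0_iff_dvd)
  moreover have "int v - int u \<noteq> 0" using assms(3) by simp
  ultimately have "\<bar>2 * int k + 1\<bar> \<le> \<bar>int v - int u\<bar>" by (rule dvd_imp_le_int[rotated])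
  then show False using assms(1,2) by linarith
qed

lemma ccol_range:
  assumes "u < 2 * k + 1" "v < 2 * k + 1" "u \<noteq> v"
  shows "ccol k {u, v} \<in> {1..k}"
proof -
  have "1 \<le> cls (2 * int k + 1) (int v - int u)" "cls (2 * int k + 1) (int v - int u) \<le> int k"
    using cls_range[OF refl diff_mod_ne0[OF assms]] by auto
  then show ?thesis using ccol_pair[OF assms(3)] unfolding ncls_def by auto
qed

lemma ccol_step:
  assumes "x < 2 * k + 1" "1 \<le> i" "i \<le> k"
  shows "colour_graph (2 * k + 1) (ccol k) i x ((x + i) mod (2 * k + 1))"
proof -
  define p where "p = 2 * k + 1"
  define P where "P = 2 * int k + 1"
  define y where "y = (x + i) mod p"
  have Pp: "P = int p" unfolding P_def p_def by simp
  have yp: "y < p" unfolding y_def p_def by simp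
  have iy: "int y = (int x + int i) mod P" unfolding y_def Pp by (simp add: of_nat_mod)
  have d: "(int y - int x) mod P = int i"
  proof -
    have "(int y - int x) mod P = (int x + int i - int x) mod P" unfolding iy by (simp add: mod_diff_left_eq)
    also have "\<dots> = int i" using assms P_def by simp
    finally show ?thesis .
  qed
  have "y \<noteq> x"
  proof
    assume "y = x" then show False using d assms(2) by simp
  qed
  have imod: "int i mod P = int i" using assms unfolding P_def by simp
  have "cls P (int y - int x) = cls P (int i)" by (rule cls_mod) (simp add: d imod)
  also have "\<dots> = int i" using cls_small[OF P_def, of "int i"] assms by simp
  finally have "ccol k {x, y} = i" using ccol_pair[OF `y \<noteq> x`[symmetric]] unfolding ncls_def P_def by simp
  then show ?thesis using yp `y \<noteq> x` assms(1) unfolding colour_graph_def y_def p_def by simp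
qed

lemma ccol_conn:
  assumes pr: "prime (2 * k + 1)" and i: "1 \<le> i" "i \<le> k" and uw: "u < 2 * k + 1" "w < 2 * k + 1"
  shows "(colour_graph (2 * k + 1) (ccol k) i)\<^sup>*\<^sup>* u w"
proof -
  define p where "p = 2 * k + 1"
  have path: "(colour_graph p (ccol k) i)\<^sup>*\<^sup>* u ((u + j * i) mod p)" for j
  proof (induction j)
    case 0 then show ?case using uw p_def by simp
  next
    case (Suc j)
    have "(u + Suc j * i) mod p = ((u + j * i) + i) mod p" by (simp add: algebra_simps)
    also have "\<dots> = ((u + j * i) mod p + i) mod p" by (simp only: mod_add_left_eq)
    finally have "(u + Suc j * i) mod p = ((u + j * i) mod p + i) mod p" .
    moreover have "colour_graph p (ccol k) i ((u + j * i) mod p) (((u + j * i) mod p + i) mod p)"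
      using ccol_step[of "(u + j * i) mod p" k i] i p_def by simp
    ultimately show ?case using Suc.IH by (metis rtranclp.rtrancl_into_rtrancl)
  qed
  obtain m where m: "0 \<le> m" "m < 2 * int k + 1" "(m * int i) mod (2 * int k + 1) = (int w - int u) mod (2 * int k + 1)"
    using exists_mult[OF pr i, of "int w - int u"] by blast
  define j where "j = nat m"
  have "int ((u + j * i) mod p) = (int u + m * int i) mod (2 * int k + 1)"
    unfolding j_def p_def using m(1) by (simp add: of_nat_mod add.commute)
  also have "\<dots> = (int u + (int w - int u)) mod (2 * int k + 1)" using m(3) by (metis mod_add_right_eq)
  also have "\<dots> = int w" using uw by simp
  finally have "(u + j * i) mod p = w" by simp
  then show ?thesis using path p_def by metis
qed

lemma triple_a1:
  assumes P: "P = 2 * int k + 1" and pr: "prime (2 * k + 1)" and k: "2 \<le> k"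
    and sum: "e1 + e2 + e3 = 0" and nz: "e1 mod P \<noteq> 0" "e2 mod P \<noteq> 0"
    and d: "cls P e1 \<noteq> cls P e2" "cls P e2 \<noteq> cls P e3" "cls P e1 \<noteq> cls P e3"
    and a: "a = ncls P e1"
  shows "\<exists>j\<in>{2..k-1}. {ncls P e1, ncls P e2, ncls P e3} = {a, ncls P (int j * int a), ncls P (int (j+1) * int a)}"
proof -
  have r: "1 \<le> cls P e1" "cls P e1 \<le> int k" using cls_range[OF P nz(1)] by auto
  have ia: "int a = cls P e1" using a r unfolding ncls_def by simp
  have a1: "1 \<le> a" "a \<le> k" using ia r by auto
  show ?thesis
  proof (cases "e1 mod P = int a")
    case True
    show ?thesis by (rule triple_core[OF P pr k True a1 sum nz(2) d])
  next
    case False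
    then have "(- e1) mod P = int a" using ia unfolding cls_def by (auto simp: min_def split: if_splits)
    moreover have "- e1 + - e2 + - e3 = 0" using sum by simp
    moreover have "(- e2) mod P \<noteq> 0"
    proof -
      have "P > 0" using P by simp
      then have "e2 mod P < P" by simp
      then show ?thesis using nz(2) by (simp add: zmod_zminus1_eq_if)
    qed
    moreover have "cls P (- e1) \<noteq> cls P (- e2)" "cls P (- e2) \<noteq> cls P (- e3)" "cls P (- e1) \<noteq> cls P (- e3)"
      using d by (simp_all add: cls_neg)
    ultimately have "\<exists>j\<in>{2..k-1}. {ncls P (- e1), ncls P (- e2), ncls P (- e3)} = {a, ncls P (int j * int a), ncls P (int (j+1) * int a)}"
      using triple_core[OF P pr k _ a1] by blast
    then show ?thesis by (simp add: ncls_def cls_neg)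
  qed
qed

lemma triple_gen:
  assumes P: "P = 2 * int k + 1" and pr: "prime (2 * k + 1)" and k: "2 \<le> k"
    and sum: "e1 + e2 + e3 = 0" and nz: "e1 mod P \<noteq> 0" "e2 mod P \<noteq> 0" "e3 mod P \<noteq> 0"
    and d: "cls P e1 \<noteq> cls P e2" "cls P e2 \<noteq> cls P e3" "cls P e1 \<noteq> cls P e3"
    and a: "a \<in> {ncls P e1, ncls P e2, ncls P e3}"
  shows "\<exists>j\<in>{2..k-1}. {ncls P e1, ncls P e2, ncls P e3} = {a, ncls P (int j * int a), ncls P (int (j+1) * int a)}"
proof -
  consider "a = ncls P e1" | "a = ncls P e2" | "a = ncls P e3" using a by blast
  then show ?thesis
  proof cases
    case 1 show ?thesis by (rule triple_a1[OF P pr k sum nz(1,2) d 1])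
  next
    case 2
    have "e2 + e3 + e1 = 0" using sum by simp
    from triple_a1[OF P pr k this nz(2,3) d(2) d(3)[symmetric] d(1)[symmetric] 2]
    show ?thesis by (simp add: insert_commute)
  next
    case 3
    have "e3 + e1 + e2 = 0" using sum by simp
    from triple_a1[OF P pr k this nz(3,1) d(3)[symmetric] d(1) d(2)[symmetric] 3]
    show ?thesis by (simp add: insert_commute)
  qed
qed

lemma constr_cc:
  assumes pr: "prime (2 * k + 1)"
  shows "connected_colouring k (2 * k + 1) (ccol k)"
  unfolding connected_colouring_def edge_colouring_def
proof (intro conjI allI impI ballI)
  show "2 \<le> 2 * k + 1" using pr by (metis One_nat_def Suc_1 Suc_eq_plus1 add_le_cancel_right le_add2 mult_0_right not_less_eq_eq prime_ge_2_nat)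
next
  fix u v assume "u < 2 * k + 1" "v < 2 * k + 1" "u \<noteq> v"
  then show "ccol k {u, v} \<in> {1..k}" by (rule ccol_range)
next
  fix i u v assume "i \<in> {1..k}" "u < 2 * k + 1" "v < 2 * k + 1"
  then show "(colour_graph (2 * k + 1) (ccol k) i)\<^sup>*\<^sup>* u v" using ccol_conn[OF pr] by auto
qed

lemma constr_deg:
  assumes pr: "prime (2 * k + 1)" and k: "2 \<le> k"
  shows "{t \<in> TT (2 * k + 1) (ccol k). a \<in> t} \<subseteq>
    (\<lambda>j. {a, ncls (2 * int k + 1) (int j * int a), ncls (2 * int k + 1) (int (j+1) * int a)}) ` {2..k-1}"
proof
  fix t assume "t \<in> {t \<in> TT (2 * k + 1) (ccol k). a \<in> t}"
  then obtain u v w where uvw: "u < 2 * k + 1" "v < 2 * k + 1" "w < 2 * k + 1" "u \<noteq> v" "v \<noteq> w" "u \<noteq> w"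
    and t: "t = {ccol k {u, v}, ccol k {v, w}, ccol k {u, w}}" "card t = 3" and at: "a \<in> t"
    unfolding multicoloured_triangle_sets_def by blast
  define P where "P = 2 * int k + 1"
  define e1 where "e1 = int v - int u"
  define e2 where "e2 = int w - int v"
  define e3 where "e3 = int u - int w"
  have c1: "ccol k {u, v} = ncls P e1" using ccol_pair[OF uvw(4)] P_def e1_def by simp
  have c2: "ccol k {v, w} = ncls P e2" using ccol_pair[OF uvw(5)] P_def e2_def by simp
  have c3: "ccol k {u, w} = ncls P e3"
  proof -
    have "ccol k {u, w} = ncls P (int w - int u)" using ccol_pair[OF uvw(6)] P_def by simp
    also have "\<dots> = ncls P (- e3)" unfolding e3_def by simp
    also have "\<dots> = ncls P e3" unfolding ncls_def by (simp add: cls_neg)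
    finally show ?thesis .
  qed
  have tt: "t = {ncls P e1, ncls P e2, ncls P e3}" using t(1) c1 c2 c3 by simp
  have dn: "ncls P e1 \<noteq> ncls P e2" "ncls P e2 \<noteq> ncls P e3" "ncls P e1 \<noteq> ncls P e3"
    using t(2) unfolding tt by (auto simp: card_insert_if split: if_splits)
  have P0: "P > 0" using P_def by simp
  have d: "cls P e1 \<noteq> cls P e2" "cls P e2 \<noteq> cls P e3" "cls P e1 \<noteq> cls P e3"
    using dn ncls_eq_iff[OF P0] by auto
  have nz: "e1 mod P \<noteq> 0" "e2 mod P \<noteq> 0" "e3 mod P \<noteq> 0"
    using diff_mod_ne0[OF uvw(1,2,4)] diff_mod_ne0[OF uvw(2,3,5)] diff_mod_ne0[OF uvw(3,1) uvw(6)[symmetric]]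
    unfolding e1_def e2_def e3_def P_def by auto
  have sum: "e1 + e2 + e3 = 0" unfolding e1_def e2_def e3_def by simp
  obtain j where "j \<in> {2..k-1}" "{ncls P e1, ncls P e2, ncls P e3} = {a, ncls P (int j * int a), ncls P (int (j+1) * int a)}"
    using triple_gen[OF P_def pr k sum nz d] at tt by blast
  then show "t \<in> (\<lambda>j. {a, ncls (2 * int k + 1) (int j * int a), ncls (2 * int k + 1) (int (j+1) * int a)}) ` {2..k-1}"
    using tt P_def by blast
qed

lemma upper_bound:
  assumes pr: "prime (2 * k + 1)" and k: "2 \<le> k"
  shows "3 * card (TT (2 * k + 1) (ccol k)) \<le> k * (k - 2)"
proof -
  have cc: "connected_colouring k (2 * k + 1) (ccol k)" using constr_cc[OF pr] .
  have ec: "edge_colouring k (2 * k + 1) (ccol k)" using cc unfolding connected_colouring_def by auto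
  have fT: "finite (TT (2 * k + 1) (ccol k))" using T_fin[OF ec] .
  have "3 * card (TT (2 * k + 1) (ccol k)) = (\<Sum>a\<in>{1..k}. card {t \<in> TT (2 * k + 1) (ccol k). a \<in> t})"
    using double_count[OF fT _ finite_atLeastAtMost] T_sub[OF ec] by (metis (no_types, lifting))
  also have "\<dots> \<le> (\<Sum>a\<in>{1..k}. k - 2)"
  proof (rule sum_mono)
    fix a
    have "card {t \<in> TT (2 * k + 1) (ccol k). a \<in> t} \<le>
      card ((\<lambda>j. {a, ncls (2 * int k + 1) (int j * int a), ncls (2 * int k + 1) (int (j+1) * int a)}) ` {2..k-1})"
      by (rule card_mono[OF _ constr_deg[OF pr k]]) simp
    also have "\<dots> \<le> card {2..k-1}" by (rule card_image_le) simp
    also have "\<dots> = k - 2" by simp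
    finally show "card {t \<in> TT (2 * k + 1) (ccol k). a \<in> t} \<le> k - 2" .
  qed
  also have "\<dots> = k * (k - 2)" by simp
  finally show ?thesis .
qed

theorem corollary5:
  fixes k :: nat
  assumes "k \<ge> 2" and "prime (2 * k + 1)"
  shows "real (f k) = real k * (real k - 2) / 3"
proof -
  define Q where "Q m \<longleftrightarrow> (\<exists>n c. connected_colouring k n c \<and> m = card (multicoloured_triangle_sets n c))" for m
  have f: "f k = (LEAST m. Q m)" unfolding f_def Q_def by simp
  have q0: "Q (card (TT (2 * k + 1) (ccol k)))" unfolding Q_def using constr_cc[OF assms(2)] by blast
  have "f k \<le> card (TT (2 * k + 1) (ccol k))" unfolding f by (rule Least_le[of Q, OF q0])
  then have up: "3 * f k \<le> k * (k - 2)" using upper_bound[OF assms(2,1)] by linarith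
  have "Q (f k)" unfolding f by (rule LeastI[of Q, OF q0])
  then obtain n c where "connected_colouring k n c" "f k = card (TT n c)" unfolding Q_def by blast
  then have lo: "k * (k - 2) \<le> 3 * f k" using lower_bound[OF _ assms(1)] by simp
  have "3 * f k = k * (k - 2)" using up lo by linarith
  then have "real (3 * f k) = real (k * (k - 2))" by simp
  then have "3 * real (f k) = real k * (real k - 2)" using assms(1) by (simp add: of_nat_diff)
  then show ?thesis by simp
qed

end
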